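(* Let $S$ be an $E$-solid locally inverse semigroup, $\rho$ an inverse semigroup congruence on $S$ whose idempotent classes are completely simple subsemigroups, $T=S/\rho$, and $\mathcal C$ the derived semigroupoid. For every arrow $a$ of $\mathcal C$ there is a unique stable arrow $b$ of $\mathcal C$ with $b\le a$.
   Context: The derived semigroupoid $\mathcal C$ has object set $T$ and arrows $\mathcal C(\alpha,\beta)=\{(\alpha,s,\beta)\in T\times S\times T:\alpha\cdot s\rho=\beta,\ \beta\cdot(s\rho)^{-1}=\alpha\}$, composition $(\alpha,s,\beta)\circ(\beta,t,\gamma)=(\alpha,st,\gamma)$. An arrow $(\alpha,s,\beta)$ is stable if $s\rho=\alpha^{-1}\beta$. The natural partial order on $\mathcal C$: $(\alpha,s,\beta)\le(\gamma,t,\delta)$ iff $\alpha=\gamma$, $\beta=\delta$ and $s\le t$ in the natural partial order of $S$ ($s\le t$ iff $s=et=tf$ for some idempotents $e,f$). Locally inverse: regular with every $eSe$ inverse; $E$-solid: idempotent-generated subsemigroup completely regular. *)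

theory Defs
  imports Main
begin

(* S is the whole type 'a with an associative multiplication. *)

definition idem :: "'a::semigroup_mult \<Rightarrow> bool" where
  "idem e \<longleftrightarrow> e * e = e"

definition natle :: "'a::semigroup_mult \<Rightarrow> 'a \<Rightarrow> bool" where
  "natle s t \<longleftrightarrow> (\<exists>e f. idem e \<and> idem f \<and> s = e * t \<and> s = t * f)"

definition regular_sg :: "'a::semigroup_mult itself \<Rightarrow> bool" where
  "regular_sg _ \<longleftrightarrow> (\<forall>a::'a. \<exists>x. a * x * a = a)"

definition inverse_sg_on :: "'b set \<Rightarrow> ('b \<Rightarrow> 'b \<Rightarrow> 'b) \<Rightarrow> bool" where
  "inverse_sg_on U m \<longleftrightarrow> (\<forall>a\<in>U. \<forall>b\<in>U. m a b \<in> U) \<and>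
     (\<forall>a\<in>U. \<exists>!b. b \<in> U \<and> m (m a b) a = a \<and> m (m b a) b = b)"

definition locally_inverse :: "'a::semigroup_mult itself \<Rightarrow> bool" where
  "locally_inverse T \<longleftrightarrow> regular_sg T \<and>
     (\<forall>e::'a. idem e \<longrightarrow> inverse_sg_on {e * s * e | s. True} (*))"

inductive_set gen_sg :: "'a::semigroup_mult set \<Rightarrow> 'a set" for A where
  base: "a \<in> A \<Longrightarrow> a \<in> gen_sg A"
| mult: "a \<in> gen_sg A \<Longrightarrow> b \<in> gen_sg A \<Longrightarrow> a * b \<in> gen_sg A"

definition completely_regular_on :: "'a::semigroup_mult set \<Rightarrow> bool" where
  "completely_regular_on U \<longleftrightarrow> (\<forall>a\<in>U. \<forall>b\<in>U. a * b \<in> U) \<and>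
     (\<forall>a\<in>U. \<exists>x\<in>U. a * x * a = a \<and> x * a * x = x \<and> a * x = x * a)"

definition E_solid :: "'a::semigroup_mult itself \<Rightarrow> bool" where
  "E_solid _ \<longleftrightarrow> completely_regular_on (gen_sg {e::'a. idem e})"

(* completely simple subsemigroup: simple (no proper two-sided ideals) and with a primitive idempotent *)
definition completely_simple_on :: "'a::semigroup_mult set \<Rightarrow> bool" where
  "completely_simple_on U \<longleftrightarrow> U \<noteq> {} \<and> (\<forall>a\<in>U. \<forall>b\<in>U. a * b \<in> U) \<and>
     (\<forall>a\<in>U. \<forall>b\<in>U. b = a \<or> (\<exists>x\<in>U. b = x * a) \<or> (\<exists>y\<in>U. b = a * y)
                      \<or> (\<exists>x\<in>U. \<exists>y\<in>U. b = x * a * y)) \<and>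
     (\<exists>e\<in>U. idem e \<and> (\<forall>f\<in>U. idem f \<and> f = e * f \<and> f = f * e \<longrightarrow> f = e))"

definition congruence :: "('a::semigroup_mult \<times> 'a) set \<Rightarrow> bool" where
  "congruence \<rho> \<longleftrightarrow> equiv UNIV \<rho> \<and>
     (\<forall>a b c. (a, b) \<in> \<rho> \<longrightarrow> (c * a, c * b) \<in> \<rho> \<and> (a * c, b * c) \<in> \<rho>)"

definition Tset :: "('a::semigroup_mult \<times> 'a) set \<Rightarrow> 'a set set" where
  "Tset \<rho> = UNIV // \<rho>"

definition cls :: "('a::semigroup_mult \<times> 'a) set \<Rightarrow> 'a \<Rightarrow> 'a set" where
  "cls \<rho> s = \<rho> `` {s}"

definition tmult :: "('a::semigroup_mult \<times> 'a) set \<Rightarrow> 'a set \<Rightarrow> 'a set \<Rightarrow> 'a set" where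
  "tmult \<rho> A B = \<rho> `` {(SOME a. a \<in> A) * (SOME b. b \<in> B)}"

definition tinv :: "('a::semigroup_mult \<times> 'a) set \<Rightarrow> 'a set \<Rightarrow> 'a set" where
  "tinv \<rho> A = (THE B. B \<in> Tset \<rho> \<and> tmult \<rho> (tmult \<rho> A B) A = A
                     \<and> tmult \<rho> (tmult \<rho> B A) B = B)"

definition inverse_congruence :: "('a::semigroup_mult \<times> 'a) set \<Rightarrow> bool" where
  "inverse_congruence \<rho> \<longleftrightarrow> congruence \<rho> \<and> inverse_sg_on (Tset \<rho>) (tmult \<rho>)"

definition is_arrow :: "('a::semigroup_mult \<times> 'a) set \<Rightarrow> 'a set \<times> 'a \<times> 'a set \<Rightarrow> bool" where
  "is_arrow \<rho> x = (case x of (\<alpha>, s, \<beta>) \<Rightarrow>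
     \<alpha> \<in> Tset \<rho> \<and> \<beta> \<in> Tset \<rho> \<and> tmult \<rho> \<alpha> (cls \<rho> s) = \<beta>
     \<and> tmult \<rho> \<beta> (tinv \<rho> (cls \<rho> s)) = \<alpha>)"

definition stable_arrow :: "('a::semigroup_mult \<times> 'a) set \<Rightarrow> 'a set \<times> 'a \<times> 'a set \<Rightarrow> bool" where
  "stable_arrow \<rho> x = (case x of (\<alpha>, s, \<beta>) \<Rightarrow> cls \<rho> s = tmult \<rho> (tinv \<rho> \<alpha>) \<beta>)"

definition arrow_le :: "'a::semigroup_mult set \<times> 'a \<times> 'a set \<Rightarrow> 'a set \<times> 'a \<times> 'a set \<Rightarrow> bool" where
  "arrow_le x y = (case x of (\<alpha>, s, \<beta>) \<Rightarrow> case y of (\<gamma>, t, \<delta>) \<Rightarrow>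
     \<alpha> = \<gamma> \<and> \<beta> = \<delta> \<and> natle s t)"

end

theory Submission
  imports Defs
begin

lemma inv_unique:
  assumes "inverse_sg_on U m" "a \<in> U" "b1 \<in> U" "b2 \<in> U"
    "m (m a b1) a = a" "m (m b1 a) b1 = b1" "m (m a b2) a = a" "m (m b2 a) b2 = b2"
  shows "b1 = b2"
  using assms unfolding inverse_sg_on_def by blast

lemma inv_idem_comm:
  assumes inv: "inverse_sg_on U m"
    and cl: "\<And>x y. x \<in> U \<Longrightarrow> y \<in> U \<Longrightarrow> m x y \<in> U"
    and as: "\<And>x y z. x \<in> U \<Longrightarrow> y \<in> U \<Longrightarrow> z \<in> U \<Longrightarrow> m (m x y) z = m x (m y z)"
    and eU: "e \<in> U" and fU: "f \<in> U" and ee: "m e e = e" and ff: "m f f = f"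
  shows "m e f = m f e"
proof -
  have idem: "m (m e f) (m e f) = m e f" if eU: "e \<in> U" and fU: "f \<in> U" and ee: "m e e = e" and ff: "m f f = f" for e f
  proof -
    let ?a = "m e f"
    have aU: "?a \<in> U" using cl eU fU by blast
    from inv aU obtain x where xU: "x \<in> U" and x1: "m (m ?a x) ?a = ?a" and x2: "m (m x ?a) x = x"
      unfolding inverse_sg_on_def by blast
    let ?y = "m (m f x) e"
    have yU: "?y \<in> U" using cl eU fU xU by blast
    have ee': "m e (m e z) = m e z" if "z \<in> U" for z using as[OF eU eU that] ee by simp
    have ff': "m f (m f z) = m f z" if "z \<in> U" for z using as[OF fU fU that] ff by simp
    have x1': "m e (m f (m x (m e f))) = m e f" using x1 by (simp add: as cl eU fU xU)
    have x2': "m x (m e (m f x)) = x" using x2 by (simp add: as cl eU fU xU)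
    have y1: "m (m ?a ?y) ?a = ?a"
      by (simp add: as cl eU fU xU ee' ff' x1')
    have x2'': "m x (m e (m f (m x z))) = m x z" if "z \<in> U" for z
    proof -
      have "m x (m e (m f (m x z))) = m (m x (m e (m f x))) z" by (simp add: as cl eU fU xU that)
      then show ?thesis using x2' by simp
    qed
    have y2: "m (m ?y ?a) ?y = ?y"
      by (simp add: as cl eU fU xU ee' ff' x2'')
    have yx: "?y = x" using inv_unique[OF inv aU yU xU y1 y2 x1 x2] .
    have xx: "m x x = x"
    proof -
      have "m x x = m ?y ?y" using yx by simp
      also have "\<dots> = m f (m (m x (m e (m f x))) e)" by (simp add: as cl eU fU xU)
      also have "\<dots> = ?y" using x2' by (simp add: as cl eU fU xU)
      finally show ?thesis using yx by simp
    qed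
    have xxx: "m (m x x) x = x" using xx by simp
    have ax: "?a = x" using inv_unique[OF inv xU aU xU x2 x1 xxx xxx] .
    show ?thesis using ax xx by simp
  qed
  have i1: "m (m e f) (m e f) = m e f" using idem eU fU ee ff .
  have i2: "m (m f e) (m f e) = m f e" using idem fU eU ff ee .
  have efU: "m e f \<in> U" and feU: "m f e \<in> U" using cl eU fU by auto
  have i1': "m e (m f (m e f)) = m e f" using i1 by (simp add: as cl eU fU)
  have i2': "m f (m e (m f e)) = m f e" using i2 by (simp add: as cl eU fU)
  have ee': "m e (m e z) = m e z" if "z \<in> U" for z using as[OF eU eU that] ee by simp
  have ff': "m f (m f z) = m f z" if "z \<in> U" for z using as[OF fU fU that] ff by simp
  have a1: "m (m (m e f) (m f e)) (m e f) = m e f"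
    by (simp add: as cl eU fU ee' ff' i1')
  have a2: "m (m (m f e) (m e f)) (m f e) = m f e"
    by (simp add: as cl eU fU ee' ff' i2')
  have a3: "m (m (m e f) (m e f)) (m e f) = m e f" using i1 by simp
  show ?thesis using inv_unique[OF inv efU efU feU a3 a3 a1 a2] .
qed


lemma cs_prim:
  assumes cs: "completely_simple_on U" and hU: "h \<in> U" and hh: "h * h = h"
    and kU: "k \<in> U" and kk: "k * k = k" and k1: "k = h * k" and k2: "k = k * h"
  shows "k = h"
proof -
  from cs obtain e where eU: "e \<in> U" and ee: "e * e = e"
    and prim: "\<And>f. f \<in> U \<Longrightarrow> f * f = f \<Longrightarrow> f = e * f \<Longrightarrow> f = f * e \<Longrightarrow> f = e"
    unfolding completely_simple_on_def idem_def by blast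
  have cl: "\<And>a b. a \<in> U \<Longrightarrow> b \<in> U \<Longrightarrow> a * b \<in> U" using cs unfolding completely_simple_on_def by blast
  have "h = e \<or> (\<exists>x\<in>U. h = x * e) \<or> (\<exists>y\<in>U. h = e * y) \<or> (\<exists>x\<in>U. \<exists>y\<in>U. h = x * e * y)"
    using cs eU hU unfolding completely_simple_on_def by blast
  then obtain u v where uU: "u \<in> U" and vU: "v \<in> U" and huv: "h = u * v"
    and ue: "u * e = u" and ev: "e * v = v"
  proof (elim disjE bexE)
    assume "h = e"
    then have "h * e \<in> U" "e * h \<in> U" "h = (h * e) * (e * h)" "(h*e) * e = h * e" "e * (e * h) = e * h"
      using cl hU eU ee hh by (simp_all add: mult.assoc)
    then show ?thesis by (rule that)
  next
    fix x assume x: "x \<in> U" "h = x * e"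
    have "h * x * e \<in> U" "e * h \<in> U" using cl hU eU x by blast+
    moreover have "h = (h * x * e) * (e * h)" using x hh ee by (metis mult.assoc)
    moreover have "(h * x * e) * e = h * x * e" "e * (e * h) = e * h" using ee by (metis mult.assoc)+
    ultimately show ?thesis by (rule that)
  next
    fix y assume y: "y \<in> U" "h = e * y"
    have "h * e \<in> U" "e * y * h \<in> U" using cl hU eU y by blast+
    moreover have "h = (h * e) * (e * y * h)" using y hh ee by (metis mult.assoc)
    moreover have "(h * e) * e = h * e" "e * (e * y * h) = e * y * h" using ee by (metis mult.assoc)+
    ultimately show ?thesis by (rule that)
  next
    fix x y assume x: "x \<in> U" "y \<in> U" "h = x * e * y"
    have "h * x * e \<in> U" "e * y * h \<in> U" using cl hU eU x by blast+
    moreover have "h = (h * x * e) * (e * y * h)" using x hh ee by (metis mult.assoc)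
    moreover have "(h * x * e) * e = h * x * e" "e * (e * y * h) = e * y * h" using ee by (metis mult.assoc)+
    ultimately show ?thesis by (rule that)
  qed
  have hk: "h * k = k" "k * h = k" using k1 k2 by auto
  let ?w = "v * k * u"
  have wU: "?w \<in> U" using cl vU kU uU by blast
  have "?w * ?w = v * (k * (u * v) * k) * u" by (simp add: mult.assoc)
  also have "\<dots> = ?w" using huv hk kk by (simp add: mult.assoc)
  finally have ww: "?w * ?w = ?w" .
  have "?w = e * ?w" using ev by (metis mult.assoc)
  moreover have "?w = ?w * e" using ue by (metis mult.assoc)
  ultimately have we: "?w = e" using prim[OF wU ww] by simp
  have "k = (u * v) * k * (u * v)" using huv hk by simp
  also have "\<dots> = u * ?w * v" by (simp add: mult.assoc)
  also have "\<dots> = u * v" using we ue by simp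
  finally show ?thesis using huv by simp
qed


lemma cong_equiv: "congruence \<rho> \<Longrightarrow> equiv UNIV \<rho>"
  unfolding congruence_def by blast

lemma cls_eq: "congruence \<rho> \<Longrightarrow> cls \<rho> a = cls \<rho> b \<longleftrightarrow> (a, b) \<in> \<rho>"
  unfolding cls_def using eq_equiv_class_iff[OF cong_equiv, of \<rho> a b] by simp

lemma cls_in_T: "cls \<rho> a \<in> Tset \<rho>"
  unfolding cls_def Tset_def by (rule quotientI) simp

lemma T_rep: "A \<in> Tset \<rho> \<Longrightarrow> \<exists>a. A = cls \<rho> a"
  unfolding cls_def Tset_def by (auto elim: quotientE)

lemma mem_cls: "x \<in> cls \<rho> a \<longleftrightarrow> (a, x) \<in> \<rho>"
  unfolding cls_def by simp

lemma cls_mult: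
  assumes c: "congruence \<rho>" and ab: "cls \<rho> a = cls \<rho> b"
  shows "cls \<rho> (c * a) = cls \<rho> (c * b)" "cls \<rho> (a * c) = cls \<rho> (b * c)"
proof -
  have "(a, b) \<in> \<rho>" using cls_eq[OF c] ab by simp
  then have "(c * a, c * b) \<in> \<rho>" "(a * c, b * c) \<in> \<rho>" using c unfolding congruence_def by blast+
  then show "cls \<rho> (c * a) = cls \<rho> (c * b)" "cls \<rho> (a * c) = cls \<rho> (b * c)"
    using cls_eq[OF c] by simp_all
qed

lemma cls_mult2:
  assumes c: "congruence \<rho>" and ab: "cls \<rho> a = cls \<rho> b" and cd: "cls \<rho> x = cls \<rho> y"
  shows "cls \<rho> (a * x) = cls \<rho> (b * y)"
  using cls_mult(2)[OF c ab, of x] cls_mult(1)[OF c cd, of b] by simp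

lemma tmult_cls:
  assumes c: "congruence \<rho>"
  shows "tmult \<rho> (cls \<rho> a) (cls \<rho> b) = cls \<rho> (a * b)"
proof -
  have e: "equiv UNIV \<rho>" using cong_equiv[OF c] .
  have "(a, a) \<in> \<rho>" using e unfolding equiv_def refl_on_def by blast
  then have "a \<in> cls \<rho> a" by (simp add: mem_cls)
  then have "(SOME x. x \<in> cls \<rho> a) \<in> cls \<rho> a" by (rule someI)
  then have "(a, SOME x. x \<in> cls \<rho> a) \<in> \<rho>" by (simp add: mem_cls)
  then have "cls \<rho> a = cls \<rho> (SOME x. x \<in> cls \<rho> a)" using cls_eq[OF c] by simp
  then have 1: "cls \<rho> (SOME x. x \<in> cls \<rho> a) = cls \<rho> a" by simp
  have "(b, b) \<in> \<rho>" using e unfolding equiv_def refl_on_def by blast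
  then have "b \<in> cls \<rho> b" by (simp add: mem_cls)
  then have "(SOME x. x \<in> cls \<rho> b) \<in> cls \<rho> b" by (rule someI)
  then have "(b, SOME x. x \<in> cls \<rho> b) \<in> \<rho>" by (simp add: mem_cls)
  then have "cls \<rho> b = cls \<rho> (SOME x. x \<in> cls \<rho> b)" using cls_eq[OF c] by simp
  then have 2: "cls \<rho> (SOME x. x \<in> cls \<rho> b) = cls \<rho> b" by simp
  have t: "tmult \<rho> A B = cls \<rho> ((SOME a. a \<in> A) * (SOME b. b \<in> B))" for A B
    by (simp add: tmult_def cls_def)
  show ?thesis unfolding t using cls_mult2[OF c 1 2] .
qed

lemma tinv_cls:
  assumes ic: "inverse_congruence \<rho>" and a1: "a * a' * a = a" and a2: "a' * a * a' = a'"
  shows "tinv \<rho> (cls \<rho> a) = cls \<rho> a'"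
proof -
  have c: "congruence \<rho>" and inv: "inverse_sg_on (Tset \<rho>) (tmult \<rho>)"
    using ic unfolding inverse_congruence_def by auto
  have P: "cls \<rho> a' \<in> Tset \<rho> \<and> tmult \<rho> (tmult \<rho> (cls \<rho> a) (cls \<rho> a')) (cls \<rho> a) = cls \<rho> a
      \<and> tmult \<rho> (tmult \<rho> (cls \<rho> a') (cls \<rho> a)) (cls \<rho> a') = cls \<rho> a'"
    unfolding tmult_cls[OF c] using a1 a2 cls_in_T by metis
  have U: "\<exists>!B. B \<in> Tset \<rho> \<and> tmult \<rho> (tmult \<rho> (cls \<rho> a) B) (cls \<rho> a) = cls \<rho> a
      \<and> tmult \<rho> (tmult \<rho> B (cls \<rho> a)) B = B"
  proof -
    have "\<forall>A\<in>Tset \<rho>. \<exists>!B. B \<in> Tset \<rho> \<and> tmult \<rho> (tmult \<rho> A B) A = A \<and> tmult \<rho> (tmult \<rho> B A) B = B"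
      using inv unfolding inverse_sg_on_def by (rule conjunct2)
    then show ?thesis using cls_in_T by (rule bspec)
  qed
  show ?thesis unfolding tinv_def using the1_equality[OF U P] .
qed

lemma T_comm:
  assumes ic: "inverse_congruence \<rho>" and ee: "cls \<rho> (e * e) = cls \<rho> e" and ff: "cls \<rho> (f * f) = cls \<rho> f"
  shows "cls \<rho> (e * f) = cls \<rho> (f * e)"
proof -
  have c: "congruence \<rho>" and inv: "inverse_sg_on (Tset \<rho>) (tmult \<rho>)"
    using ic unfolding inverse_congruence_def by auto
  have cl: "\<And>x y. x \<in> Tset \<rho> \<Longrightarrow> y \<in> Tset \<rho> \<Longrightarrow> tmult \<rho> x y \<in> Tset \<rho>"
  proof -
    fix x y assume "x \<in> Tset \<rho>" "y \<in> Tset \<rho>"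
    then obtain p q where "x = cls \<rho> p" "y = cls \<rho> q" using T_rep by metis
    then show "tmult \<rho> x y \<in> Tset \<rho>" by (simp add: tmult_cls[OF c] cls_in_T)
  qed
  have as: "\<And>x y z. x \<in> Tset \<rho> \<Longrightarrow> y \<in> Tset \<rho> \<Longrightarrow> z \<in> Tset \<rho> \<Longrightarrow>
      tmult \<rho> (tmult \<rho> x y) z = tmult \<rho> x (tmult \<rho> y z)"
  proof -
    fix x y z assume "x \<in> Tset \<rho>" "y \<in> Tset \<rho>" "z \<in> Tset \<rho>"
    then obtain p q r where "x = cls \<rho> p" "y = cls \<rho> q" "z = cls \<rho> r" using T_rep by metis
    then show "tmult \<rho> (tmult \<rho> x y) z = tmult \<rho> x (tmult \<rho> y z)"
      by (simp add: tmult_cls[OF c] mult.assoc)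
  qed
  have "tmult \<rho> (cls \<rho> e) (cls \<rho> f) = tmult \<rho> (cls \<rho> f) (cls \<rho> e)"
    by (rule inv_idem_comm[OF inv cl as cls_in_T cls_in_T]) (simp_all add: tmult_cls[OF c] ee ff)
  then show ?thesis by (simp add: tmult_cls[OF c])
qed


lemma mem_cls': "congruence \<rho> \<Longrightarrow> x \<in> cls \<rho> a \<longleftrightarrow> cls \<rho> a = cls \<rho> x"
  using cls_eq mem_cls by metis

lemma reg_inv:
  assumes "regular_sg TYPE('a::semigroup_mult)"
  shows "\<exists>s'. s * s' * s = s \<and> s' * s * s' = (s'::'a)"
proof -
  obtain x where x: "s * x * s = s" using assms unfolding regular_sg_def by blast
  have "s * (x * s * x) * s = s" using x by (metis mult.assoc)
  moreover have "(x * s * x) * s * (x * s * x) = x * s * x" using x by (metis mult.assoc)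
  ultimately show ?thesis by blast
qed

lemma local_inv:
  assumes li: "locally_inverse TYPE('a::semigroup_mult)" and gg: "g * g = (g::'a)"
  shows "inverse_sg_on {g * x * g | x. True} (*)"
  using li gg unfolding locally_inverse_def idem_def by blast

lemma G_comm:
  assumes li: "locally_inverse TYPE('a::semigroup_mult)" and gg: "g * g = (g::'a)"
    and h1: "h1 * h1 = h1" "g * h1 = h1" "h1 * g = h1"
    and h2: "h2 * h2 = h2" "g * h2 = h2" "h2 * g = h2"
  shows "h1 * h2 = h2 * h1"
proof -
  let ?G = "{g * x * g | x. True}"
  have inv: "inverse_sg_on ?G (*)" using local_inv[OF li gg] .
  have cl: "x * y \<in> ?G" if "x \<in> ?G" "y \<in> ?G" for x y
  proof -
    from that obtain u v where "x = g * u * g" "y = g * v * g" by blast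
    then have "x * y = g * (u * g * g * v) * g" by (simp add: mult.assoc)
    then show ?thesis by blast
  qed
  have m1: "h1 \<in> ?G" using h1 by (metis (mono_tags, lifting) mem_Collect_eq)
  have m2: "h2 \<in> ?G" using h2 by (metis (mono_tags, lifting) mem_Collect_eq)
  show ?thesis
    using inv_idem_comm[of ?G "(*)" h1 h2, OF inv cl mult.assoc m1 m2 h1(1) h2(1)] .
qed

lemma below_form:
  assumes ns: "natle t s" and s1: "s * s' * s = s" and s2: "s' * s * s' = s'"
  shows "\<exists>h. h * h = h \<and> (s * s') * h = h \<and> h * (s * s') = h \<and> t = h * s"
proof -
  obtain e f where e: "e * e = e" and f: "f * f = f" and te: "t = e * s" and tf: "t = s * f"
    using ns unfolding natle_def idem_def by blast
  let ?h = "s * f * s'"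
  have t1: "t * s' * s = t" using te s1 by (metis mult.assoc)
  have t2: "t * s' * s = ?h * s" using tf by (simp add: mult.assoc)
  have sf: "s * f * s' * s = s * f" using t1 t2 tf by simp
  have "?h * ?h = (s * f * s' * s) * f * s'" by (simp add: mult.assoc)
  also have "\<dots> = ?h" using sf f by (simp add: mult.assoc)
  finally have hh: "?h * ?h = ?h" .
  have "(s * s') * ?h = ?h" using s1 by (metis mult.assoc)
  moreover have "?h * (s * s') = ?h" using s2 by (metis mult.assoc)
  moreover have "t = ?h * s" using t1 t2 by simp
  ultimately show ?thesis using hh by blast
qed

lemma uniq_core:
  fixes \<rho> :: "('a::semigroup_mult \<times> 'a) set"
  assumes li: "locally_inverse TYPE('a)"
    and ic: "inverse_congruence \<rho>"
    and cs: "\<forall>\<alpha>\<in>Tset \<rho>. tmult \<rho> \<alpha> \<alpha> = \<alpha> \<longrightarrow> completely_simple_on \<alpha>"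
    and n1: "natle t1 s" and n2: "natle t2 s" and eq: "cls \<rho> t1 = cls \<rho> t2"
  shows "t1 = t2"
proof -
  have c: "congruence \<rho>" using ic unfolding inverse_congruence_def by auto
  have reg: "regular_sg TYPE('a)" using li unfolding locally_inverse_def by auto
  obtain s' where s1: "s * s' * s = s" and s2: "s' * s * s' = s'" using reg_inv[OF reg] by blast
  let ?g = "s * s'"
  have gg: "?g * ?g = ?g" using s1 by (metis mult.assoc)
  obtain h1 where h1: "h1 * h1 = h1" "?g * h1 = h1" "h1 * ?g = h1" and th1: "t1 = h1 * s"
    using below_form[OF n1 s1 s2] by blast
  obtain h2 where h2: "h2 * h2 = h2" "?g * h2 = h2" "h2 * ?g = h2" and th2: "t2 = h2 * s"
    using below_form[OF n2 s1 s2] by blast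
  have "h1 = t1 * s'" using h1(3) th1 by (simp add: mult.assoc)
  moreover have "h2 = t2 * s'" using h2(3) th2 by (simp add: mult.assoc)
  ultimately have ch: "cls \<rho> h1 = cls \<rho> h2" using cls_mult(2)[OF c eq] by simp
  have comm: "h1 * h2 = h2 * h1" using G_comm[OF li gg h1 h2] .
  let ?k = "cls \<rho> h1"
  have kT: "?k \<in> Tset \<rho>" by (rule cls_in_T)
  have "tmult \<rho> ?k ?k = ?k" using h1(1) by (simp add: tmult_cls[OF c])
  then have csk: "completely_simple_on ?k" using cs kT by blast
  have c12: "cls \<rho> (h1 * h2) = cls \<rho> h1" using cls_mult(1)[OF c ch[symmetric], of h1] h1(1) by simp
  have c21: "cls \<rho> (h2 * h1) = cls \<rho> h1" using cls_mult(1)[OF c ch, of h2] h2(1) ch by simp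
  have in1: "h1 \<in> ?k" using mem_cls'[OF c] by simp
  have in2: "h2 \<in> ?k" using mem_cls'[OF c] ch by simp
  have in12: "h1 * h2 \<in> ?k" using mem_cls'[OF c] c12 by simp
  have in21: "h2 * h1 \<in> ?k" using mem_cls'[OF c] c21 by simp
  have kk: "(h1 * h2) * (h1 * h2) = h1 * h2"
    using comm h1(1) h2(1) by (metis mult.assoc)
  have a: "h1 * h2 = h1"
    by (rule cs_prim[OF csk in1 h1(1) in12 kk]) (use comm h1(1) h2(1) in \<open>metis mult.assoc\<close>)+
  have kk2: "(h2 * h1) * (h2 * h1) = h2 * h1"
    using comm h1(1) h2(1) by (metis mult.assoc)
  have b: "h2 * h1 = h2"
    by (rule cs_prim[OF csk in2 h2(1) in21 kk2]) (use comm h1(1) h2(1) in \<open>metis mult.assoc\<close>)+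
  have "h1 = h2" using a b comm by simp
  then show ?thesis using th1 th2 by simp
qed


theorem lemma5p3:
  fixes \<rho> :: "('a::semigroup_mult \<times> 'a) set"
  assumes "E_solid TYPE('a)"
    and "locally_inverse TYPE('a)"
    and "inverse_congruence \<rho>"
    and "\<forall>\<alpha>\<in>Tset \<rho>. tmult \<rho> \<alpha> \<alpha> = \<alpha> \<longrightarrow> completely_simple_on \<alpha>"
    and "is_arrow \<rho> a"
  shows "\<exists>!b. is_arrow \<rho> b \<and> stable_arrow \<rho> b \<and> arrow_le b a"
proof -
  note li = assms(2) and ic = assms(3) and cs = assms(4)
  have c: "congruence \<rho>" and invT: "inverse_sg_on (Tset \<rho>) (tmult \<rho>)"
    using ic unfolding inverse_congruence_def by auto
  have reg: "regular_sg TYPE('a)" using li unfolding locally_inverse_def by auto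
  obtain \<alpha> s \<beta> where a: "a = (\<alpha>, s, \<beta>)" by (cases a) auto
  have aT: "\<alpha> \<in> Tset \<rho>" and bT: "\<beta> \<in> Tset \<rho>" and ab: "tmult \<rho> \<alpha> (cls \<rho> s) = \<beta>"
    and ba: "tmult \<rho> \<beta> (tinv \<rho> (cls \<rho> s)) = \<alpha>"
    using assms(5) unfolding a is_arrow_def by auto
  obtain p where p: "\<alpha> = cls \<rho> p" using T_rep[OF aT] by blast
  obtain s' where s1: "s * s' * s = s" and s2: "s' * s * s' = s'" using reg_inv[OF reg] by blast
  obtain p' where p1: "p * p' * p = p" and p2: "p' * p * p' = p'" using reg_inv[OF reg] by blast
  have tis: "tinv \<rho> (cls \<rho> s) = cls \<rho> s'" using tinv_cls[OF ic s1 s2] .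
  have tip: "tinv \<rho> \<alpha> = cls \<rho> p'" using tinv_cls[OF ic p1 p2] p by simp
  have beta: "\<beta> = cls \<rho> (p * s)" using ab p by (simp add: tmult_cls[OF c])
  have pss: "cls \<rho> (p * s * s') = cls \<rho> p" using ba beta tis p by (simp add: tmult_cls[OF c])
  define g where "g = s * s'"
  have gg: "g * g = g" unfolding g_def using s1 by (metis mult.assoc)
  have pg: "cls \<rho> (p * g) = cls \<rho> p" using pss unfolding g_def by (simp add: mult.assoc)
  let ?K = "cls \<rho> (p' * p)"
  have "p' * p * (p' * p) = p' * p" using p2 by (metis mult.assoc)
  then have "tmult \<rho> ?K ?K = ?K" by (simp add: tmult_cls[OF c])
  then have csK: "completely_simple_on ?K" using cs cls_in_T by blast
  then obtain f where fK: "f \<in> ?K" and ff: "f * f = f"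
    unfolding completely_simple_on_def idem_def by blast
  have cf: "cls \<rho> f = cls \<rho> (p' * p)" using fK mem_cls'[OF c] by simp
  have "cls \<rho> (f * g) = cls \<rho> (p' * p * g)" using cls_mult(2)[OF c cf] .
  also have "\<dots> = cls \<rho> (p' * (p * g))" by (simp add: mult.assoc)
  also have "\<dots> = cls \<rho> (p' * p)" using cls_mult(1)[OF c pg] .
  finally have fg: "cls \<rho> (f * g) = cls \<rho> f" using cf by simp
  have gf: "cls \<rho> (g * f) = cls \<rho> f" using T_comm[OF ic, of g f] gg ff fg by simp
  define z where "z = g * f * g"
  have cz: "cls \<rho> z = cls \<rho> f" unfolding z_def using cls_mult(2)[OF c gf, of g] fg by simp
  let ?G = "{g * x * g | x. True}"
  have zG: "z \<in> ?G" unfolding z_def by blast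
  have "\<forall>a\<in>?G. \<exists>!b. b \<in> ?G \<and> a * b * a = a \<and> b * a * b = b"
    using local_inv[OF li gg] unfolding inverse_sg_on_def by (rule conjunct2)
  then obtain x where xG: "x \<in> ?G" and zx1: "z * x * z = z" and zx2: "x * z * x = x"
    using zG by blast
  obtain y where xy: "x = g * y * g" using xG by blast
  have xg: "x * g = x" using xy gg by (metis mult.assoc)
  have gz: "g * z = z" unfolding z_def using gg by (metis mult.assoc)
  have zz: "cls \<rho> (z * z) = cls \<rho> z" using cls_mult2[OF c cz cz] ff cz by simp
  have zzz: "cls \<rho> (z * z * z) = cls \<rho> z" using cls_mult(2)[OF c zz, of z] zz by simp
  have cx: "cls \<rho> x = cls \<rho> z"
  proof (rule inv_unique[OF invT cls_in_T cls_in_T cls_in_T])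
    show "tmult \<rho> (tmult \<rho> (cls \<rho> z) (cls \<rho> x)) (cls \<rho> z) = cls \<rho> z"
      using zx1 by (simp add: tmult_cls[OF c])
    show "tmult \<rho> (tmult \<rho> (cls \<rho> x) (cls \<rho> z)) (cls \<rho> x) = cls \<rho> x"
      using zx2 by (simp add: tmult_cls[OF c])
    show "tmult \<rho> (tmult \<rho> (cls \<rho> z) (cls \<rho> z)) (cls \<rho> z) = cls \<rho> z"
      using zzz by (simp add: tmult_cls[OF c])
    then show "tmult \<rho> (tmult \<rho> (cls \<rho> z) (cls \<rho> z)) (cls \<rho> z) = cls \<rho> z" .
  qed
  define h where "h = z * x"
  have hh: "h * h = h" unfolding h_def using zx1 by (metis mult.assoc)
  have gh: "g * h = h" unfolding h_def using gz by (metis mult.assoc)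
  have hg: "h * g = h" unfolding h_def using xg by (metis mult.assoc)
  have ch: "cls \<rho> h = cls \<rho> f"
    unfolding h_def using cls_mult(1)[OF c cx, of z] zz cz by simp
  define t where "t = h * s"
  let ?b = "(\<alpha>, t, \<beta>)"
  have ct: "cls \<rho> t = cls \<rho> (p' * p * s)" unfolding t_def using cls_mult(2)[OF c ch] cf cls_mult(2)[OF c cf] by simp
  have nat: "natle t s"
  proof -
    have "(s' * h * s) * (s' * h * s) = s' * h * (s * s') * h * s" by (simp add: mult.assoc)
    also have "\<dots> = s' * h * s" using gh hh unfolding g_def by (metis mult.assoc)
    finally have i: "idem (s' * h * s)" unfolding idem_def .
    have "t = s * (s' * h * s)" unfolding t_def using gh unfolding g_def by (metis mult.assoc)
    then show ?thesis unfolding natle_def idem_def using i hh unfolding idem_def t_def by blast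
  qed
  have stab: "stable_arrow \<rho> ?b"
    unfolding stable_arrow_def using ct tip beta by (simp add: tmult_cls[OF c] mult.assoc)
  have le: "arrow_le ?b a" unfolding arrow_le_def a using nat by simp
  have t1: "t * (s' * h) * t = t" unfolding t_def using hg hh unfolding g_def by (metis mult.assoc)
  have t2: "(s' * h) * t * (s' * h) = s' * h" unfolding t_def using hg hh unfolding g_def by (metis mult.assoc)
  have tit: "tinv \<rho> (cls \<rho> t) = cls \<rho> (s' * h)" using tinv_cls[OF ic t1 t2] .
  have arr: "is_arrow \<rho> ?b"
  proof -
    have "cls \<rho> (p * t) = cls \<rho> (p * p' * p * s)"
      using cls_mult(1)[OF c ct, of p] by (simp add: mult.assoc)
    also have "\<dots> = cls \<rho> (p * s)" using p1 by simp
    finally have 1: "tmult \<rho> \<alpha> (cls \<rho> t) = \<beta>" using p beta by (simp add: tmult_cls[OF c])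
    have "p * s * (s' * h) = p * h" using gh unfolding g_def by (simp add: mult.assoc)
    then have "cls \<rho> (p * s * (s' * h)) = cls \<rho> (p * (p' * p))"
      using cls_mult(1)[OF c ch, of p] cls_mult(1)[OF c cf, of p] by simp
    also have "\<dots> = cls \<rho> p" using p1 by (simp add: mult.assoc)
    finally have 2: "tmult \<rho> \<beta> (tinv \<rho> (cls \<rho> t)) = \<alpha>" using tit p beta by (simp add: tmult_cls[OF c])
    show ?thesis unfolding is_arrow_def using aT bT 1 2 by simp
  qed
  show ?thesis
  proof (rule ex1I[of _ ?b])
    show "is_arrow \<rho> ?b \<and> stable_arrow \<rho> ?b \<and> arrow_le ?b a" using arr stab le by blast
  next
    fix b assume hb: "is_arrow \<rho> b \<and> stable_arrow \<rho> b \<and> arrow_le b a"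
    obtain \<alpha>' u \<beta>' where b: "b = (\<alpha>', u, \<beta>')" by (cases b) auto
    have e1: "\<alpha>' = \<alpha>" "\<beta>' = \<beta>" and nu: "natle u s" using hb unfolding b a arrow_le_def by auto
    have "cls \<rho> u = tmult \<rho> (tinv \<rho> \<alpha>) \<beta>" using hb e1 unfolding b stable_arrow_def by simp
    then have cu: "cls \<rho> u = cls \<rho> t" using ct tip beta by (simp add: tmult_cls[OF c] mult.assoc)
    have "u = t" using uniq_core[OF li ic cs nu nat cu] .
    then show "b = ?b" using b e1 by simp
  qed
qed

end
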